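(* Let $\mathcal D$ be universal, $\mathrm H=(H,d)\in\mathfrak U_{\mathcal D}$, and let $\mathfrak t$ be a Katětov function of $\mathrm H$ with nonempty domain. Let $\mathcal D_{\mathfrak t}=\{n\in\mathcal D: n\le 2\operatorname{rank}(\mathfrak t)\}$. Then $\mathcal D_{\mathfrak t}$ is universal and the subspace of $\mathrm H$ on $\operatorname{orb}(\mathfrak t)$ is isometric to $\mathbf U_{\mathcal D_{\mathfrak t}}$; in particular $\operatorname{orb}(\mathfrak t)$ is infinite.
   Context: $\mathcal D$ is a finite subset of $\mathbb R_{\ge0}$ containing $0$. $\mathfrak U_{\mathcal D}$ is the class of countable homogeneous metric spaces (every isometry between finite subspaces extends to an isometry of the space onto itself) with distance set exactly $\mathcal D$ into which every finite metric space with distances in $\mathcal D$ embeds isometrically; these are all isometric, $\mathbf U_{\mathcal D}$ denotes one of them, and $\mathcal D$ is universal if the class is nonempty. For a metric space $(M,d)$ with distances in $\mathcal D$, a Katětov function is a map $\mathfrak t:F\to\mathcal D\setminus\{0\}$, $F\subseteq M$ finite, with $|\mathfrak t(x)-\mathfrak t(y)|\le d(x,y)\le\mathfrak t(x)+\mathfrak t(y)$ for all $x,y\in F$. Its orbit is $\operatorname{orb}(\mathfrak t)=\{y\in M\setminus F: d(y,x)=\mathfrak t(x)\text{ for all }x\in F\}$ and its rank is $\operatorname{rank}(\mathfrak t)=\min_{x\in F}\mathfrak t(x)$. *)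

theory Defs
  imports Complex_Main "HOL-Library.Countable_Set"
begin

definition metric_on :: "'a set \<Rightarrow> ('a \<Rightarrow> 'a \<Rightarrow> real) \<Rightarrow> bool" where
  "metric_on M d \<longleftrightarrow>
     (\<forall>x\<in>M. \<forall>y\<in>M. d x y \<ge> 0 \<and> (d x y = 0 \<longleftrightarrow> x = y) \<and> d x y = d y x) \<and>
     (\<forall>x\<in>M. \<forall>y\<in>M. \<forall>z\<in>M. d x z \<le> d x y + d y z)"

definition dist_set :: "'a set \<Rightarrow> ('a \<Rightarrow> 'a \<Rightarrow> real) \<Rightarrow> real set" where
  "dist_set M d = {d x y | x y. x \<in> M \<and> y \<in> M}"

definition isometry_onto :: "('a \<Rightarrow> 'b) \<Rightarrow> 'a set \<Rightarrow> ('a \<Rightarrow> 'a \<Rightarrow> real)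
    \<Rightarrow> 'b set \<Rightarrow> ('b \<Rightarrow> 'b \<Rightarrow> real) \<Rightarrow> bool" where
  "isometry_onto f A dA B dB \<longleftrightarrow> bij_betw f A B \<and> (\<forall>x\<in>A. \<forall>y\<in>A. dB (f x) (f y) = dA x y)"

definition isometric :: "'a set \<Rightarrow> ('a \<Rightarrow> 'a \<Rightarrow> real) \<Rightarrow> 'b set \<Rightarrow> ('b \<Rightarrow> 'b \<Rightarrow> real) \<Rightarrow> bool" where
  "isometric A dA B dB \<longleftrightarrow> (\<exists>f. isometry_onto f A dA B dB)"

definition homogeneous :: "'a set \<Rightarrow> ('a \<Rightarrow> 'a \<Rightarrow> real) \<Rightarrow> bool" where
  "homogeneous M d \<longleftrightarrow>
     (\<forall>F G f. F \<subseteq> M \<and> G \<subseteq> M \<and> finite F \<and> isometry_onto f F d G d \<longrightarrow>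
        (\<exists>g. isometry_onto g M d M d \<and> (\<forall>x\<in>F. g x = f x)))"

text \<open>Membership in the class U_D. Finite metric spaces are represented (up to isometry)
  on finite subsets of nat.\<close>
definition in_U :: "real set \<Rightarrow> 'a set \<Rightarrow> ('a \<Rightarrow> 'a \<Rightarrow> real) \<Rightarrow> bool" where
  "in_U D M d \<longleftrightarrow> countable M \<and> metric_on M d \<and> dist_set M d = D \<and> homogeneous M d \<and>
     (\<forall>(N::nat set) e. finite N \<and> metric_on N e \<and> dist_set N e \<subseteq> D \<longrightarrow>
        (\<exists>f. f ` N \<subseteq> M \<and> (\<forall>x\<in>N. \<forall>y\<in>N. d (f x) (f y) = e x y)))"

text \<open>D is universal iff U_D is nonempty (countable spaces may be taken on nat).\<close>
definition universal :: "real set \<Rightarrow> bool" where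
  "universal D \<longleftrightarrow> (\<exists>(M::nat set) d. in_U D M d)"

definition katetov :: "real set \<Rightarrow> 'a set \<Rightarrow> ('a \<Rightarrow> 'a \<Rightarrow> real) \<Rightarrow> 'a set \<Rightarrow> ('a \<Rightarrow> real) \<Rightarrow> bool" where
  "katetov D M d F t \<longleftrightarrow> F \<subseteq> M \<and> finite F \<and> t ` F \<subseteq> D - {0} \<and>
     (\<forall>x\<in>F. \<forall>y\<in>F. \<bar>t x - t y\<bar> \<le> d x y \<and> d x y \<le> t x + t y)"

definition orb :: "'a set \<Rightarrow> ('a \<Rightarrow> 'a \<Rightarrow> real) \<Rightarrow> 'a set \<Rightarrow> ('a \<Rightarrow> real) \<Rightarrow> 'a set" where
  "orb M d F t = {y \<in> M - F. \<forall>x\<in>F. d y x = t x}"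

definition rank :: "'a set \<Rightarrow> ('a \<Rightarrow> real) \<Rightarrow> real" where
  "rank F t = Min (t ` F)"

end

theory Submission
  imports Defs
begin

lemma iso_comp:
  "isometry_onto f A dA B dB \<Longrightarrow> isometry_onto g B dB C dC \<Longrightarrow> isometry_onto (g \<circ> f) A dA C dC"
  unfolding isometry_onto_def
  by (auto intro: comp_inj_on simp: bij_betw_def)

lemma iso_inv:
  assumes "isometry_onto f A dA B dB"
  shows "isometry_onto (inv_into A f) B dB A dA"
proof -
  have b: "bij_betw f A B" using assms unfolding isometry_onto_def by auto
  have "\<forall>x\<in>B. \<forall>y\<in>B. dA (inv_into A f x) (inv_into A f y) = dB x y"
  proof (intro ballI)
    fix x y assume "x \<in> B" "y \<in> B"
    then have "inv_into A f x \<in> A" "inv_into A f y \<in> A"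
      "f (inv_into A f x) = x" "f (inv_into A f y) = y"
      using b by (auto simp: bij_betw_def inv_into_into f_inv_into_f)
    then show "dA (inv_into A f x) (inv_into A f y) = dB x y"
      using assms unfolding isometry_onto_def by metis
  qed
  then show ?thesis using bij_betw_inv_into[OF b] unfolding isometry_onto_def by auto
qed

lemma iso_restrict:
  "isometry_onto f A dA B dB \<Longrightarrow> S \<subseteq> A \<Longrightarrow> isometry_onto f S dA (f`S) dB"
  unfolding isometry_onto_def bij_betw_def by (auto intro: inj_on_subset)

lemma iso_of_inj:
  assumes "inj_on f M"
  shows "isometry_onto f M d (f`M) (\<lambda>a b. d (inv_into M f a) (inv_into M f b))"
  using assms unfolding isometry_onto_def by (auto simp: inj_on_imp_bij_betw)

lemma metric_on_iso:
  assumes "metric_on M d" "isometry_onto f M d N e"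
  shows "metric_on N e"
proof -
  have b: "f ` M = N" and inj: "inj_on f M" and de: "\<And>x y. x\<in>M \<Longrightarrow> y\<in>M \<Longrightarrow> e (f x) (f y) = d x y"
    using assms(2) unfolding isometry_onto_def bij_betw_def by auto
  show ?thesis unfolding metric_on_def
  proof (intro conjI ballI)
    fix a b assume "a \<in> N" "b \<in> N"
    then obtain x y where xy: "x\<in>M" "y\<in>M" "a = f x" "b = f y" using b by auto
    then show "e a b \<ge> 0" "e a b = 0 \<longleftrightarrow> a = b" "e a b = e b a"
      using assms(1) de inj unfolding metric_on_def inj_on_def by metis+
  next
    fix a b c assume "a \<in> N" "b \<in> N" "c \<in> N"
    then obtain x y z where xy: "x\<in>M" "y\<in>M" "z\<in>M" "a = f x" "b = f y" "c = f z" using b by auto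
    then show "e a c \<le> e a b + e b c"
      using assms(1) de unfolding metric_on_def by metis
  qed
qed

lemma dist_set_iso:
  assumes "isometry_onto f M d N e"
  shows "dist_set N e = dist_set M d"
proof -
  have b: "f ` M = N" and de: "\<And>x y. x\<in>M \<Longrightarrow> y\<in>M \<Longrightarrow> e (f x) (f y) = d x y"
    using assms unfolding isometry_onto_def bij_betw_def by auto
  show ?thesis unfolding dist_set_def
  proof (intro set_eqI iffI)
    fix r assume "r \<in> {e x y |x y. x \<in> N \<and> y \<in> N}"
    then obtain a b where "a\<in>N" "b\<in>N" "r = e a b" by auto
    then obtain x y where "x\<in>M" "y\<in>M" "a = f x" "b = f y" using b by auto
    then show "r \<in> {d x y |x y. x \<in> M \<and> y \<in> M}" using de \<open>r = e a b\<close> by auto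
  next
    fix r assume "r \<in> {d x y |x y. x \<in> M \<and> y \<in> M}"
    then obtain x y where "x\<in>M" "y\<in>M" "r = d x y" by auto
    then have "r = e (f x) (f y)" "f x \<in> N" "f y \<in> N" using de b by auto
    then show "r \<in> {e x y |x y. x \<in> N \<and> y \<in> N}" by blast
  qed
qed

lemma in_U_iso:
  assumes U: "in_U D M d" and I: "isometry_onto f M d N e"
  shows "in_U D N e"
proof -
  have b: "bij_betw f M N" and de: "\<And>x y. x\<in>M \<Longrightarrow> y\<in>M \<Longrightarrow> e (f x) (f y) = d x y"
    using I unfolding isometry_onto_def by auto
  have fM: "f ` M = N" using b by (simp add: bij_betw_def)
  define fi where "fi = inv_into M f"
  have Ii: "isometry_onto fi N e M d" unfolding fi_def by (rule iso_inv[OF I])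
  have fi_in: "\<And>a. a \<in> N \<Longrightarrow> fi a \<in> M" and ffi: "\<And>a. a \<in> N \<Longrightarrow> f (fi a) = a"
    using fM unfolding fi_def by (auto simp: inv_into_into f_inv_into_f)
  have cM: "countable M" and mM: "metric_on M d" and dM: "dist_set M d = D"
    and hom: "homogeneous M d"
    and eM: "\<forall>(K::nat set) c. finite K \<and> metric_on K c \<and> dist_set K c \<subseteq> D \<longrightarrow>
        (\<exists>g. g ` K \<subseteq> M \<and> (\<forall>x\<in>K. \<forall>y\<in>K. d (g x) (g y) = c x y))"
    using U unfolding in_U_def by auto
  have c1: "countable N" using cM fM by auto
  have c2: "metric_on N e" using metric_on_iso[OF mM I] .
  have c3: "dist_set N e = D" using dM dist_set_iso[OF I] by simp
  have c4: "homogeneous N e" unfolding homogeneous_def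
  proof (intro allI impI)
    fix A B h assume as: "A \<subseteq> N \<and> B \<subseteq> N \<and> finite A \<and> isometry_onto h A e B e"
    have fiA: "fi ` A \<subseteq> M" "fi ` B \<subseteq> M" "finite (fi ` A)" using as fi_in by auto
    have fA: "f ` (fi ` A) = A" using as ffi by (force simp: image_image)
    have i1: "isometry_onto f (fi ` A) d A e"
      using iso_restrict[OF I fiA(1)] fA by simp
    have i3: "isometry_onto fi B e (fi ` B) d" using iso_restrict[OF Ii] as by auto
    have i: "isometry_onto (fi \<circ> (h \<circ> f)) (fi ` A) d (fi ` B) d"
      using iso_comp[OF iso_comp[OF i1] i3] as by auto
    obtain g0 where g0: "isometry_onto g0 M d M d" "\<forall>x\<in>fi ` A. g0 x = (fi \<circ> (h \<circ> f)) x"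
      using hom[unfolded homogeneous_def, rule_format, of "fi ` A" "fi ` B" "fi \<circ> (h \<circ> f)"] fiA i
      by blast
    have g: "isometry_onto (f \<circ> (g0 \<circ> fi)) N e N e"
      by (rule iso_comp[OF iso_comp[OF Ii g0(1)] I])
    have "\<forall>x\<in>A. (f \<circ> (g0 \<circ> fi)) x = h x"
    proof
      fix x assume "x \<in> A"
      then have "h x \<in> B" using as unfolding isometry_onto_def bij_betw_def by auto
      have "f (fi x) = x" using ffi as \<open>x\<in>A\<close> by auto
      then have "g0 (fi x) = fi (h x)" using g0(2) \<open>x\<in>A\<close> by auto
      then show "(f \<circ> (g0 \<circ> fi)) x = h x" using ffi \<open>h x \<in> B\<close> as by auto
    qed
    then show "\<exists>g. isometry_onto g N e N e \<and> (\<forall>x\<in>A. g x = h x)" using g by blast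
  qed
  have c5: "\<forall>(K::nat set) c. finite K \<and> metric_on K c \<and> dist_set K c \<subseteq> D \<longrightarrow>
        (\<exists>g. g ` K \<subseteq> N \<and> (\<forall>x\<in>K. \<forall>y\<in>K. e (g x) (g y) = c x y))"
  proof (intro allI impI)
    fix K :: "nat set" and c assume "finite K \<and> metric_on K c \<and> dist_set K c \<subseteq> D"
    then obtain g where "g ` K \<subseteq> M" "\<forall>x\<in>K. \<forall>y\<in>K. d (g x) (g y) = c x y"
      using eM by blast
    then show "\<exists>g. g ` K \<subseteq> N \<and> (\<forall>x\<in>K. \<forall>y\<in>K. e (g x) (g y) = c x y)"
      using de fM by (intro exI[of _ "f \<circ> g"]) (auto simp: image_subset_iff)
  qed
  show ?thesis unfolding in_U_def by (intro conjI c1 c2 c3 c4 c5)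
qed

lemma to_nat_copy:
  assumes "in_U D M d"
  shows "\<exists>(N::nat set) e. in_U D N e \<and> isometric M d N e"
proof -
  have "countable M" using assms unfolding in_U_def by auto
  then have "inj_on (to_nat_on M) M" by auto
  then have I: "isometry_onto (to_nat_on M) M d (to_nat_on M ` M)
     (\<lambda>a b. d (inv_into M (to_nat_on M) a) (inv_into M (to_nat_on M) b))"
    by (rule iso_of_inj)
  have "in_U D (to_nat_on M ` M) (\<lambda>a b. d (inv_into M (to_nat_on M) a) (inv_into M (to_nat_on M) b))"
    by (rule in_U_iso[OF assms I])
  then show ?thesis using I unfolding isometric_def by blast
qed

lemma embed_any:
  fixes A :: "'b set"
  assumes U: "in_U D H d" and fin: "finite A" and m: "metric_on A e" and ds: "dist_set A e \<subseteq> D"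
  shows "\<exists>\<phi>. \<phi> ` A \<subseteq> H \<and> (\<forall>x\<in>A. \<forall>y\<in>A. d (\<phi> x) (\<phi> y) = e x y)"
proof -
  obtain h where hb: "bij_betw h A {0..<card A}" using ex_bij_betw_finite_nat[OF fin] by blast
  then have inj: "inj_on h A" by (simp add: bij_betw_def)
  define e' where "e' = (\<lambda>a b. e (inv_into A h a) (inv_into A h b))"
  have I: "isometry_onto h A e (h ` A) e'" unfolding e'_def by (rule iso_of_inj[OF inj])
  have "finite (h ` A)" using fin by auto
  moreover have "metric_on (h`A) e'" using metric_on_iso[OF m I] .
  moreover have "dist_set (h`A) e' \<subseteq> D" using dist_set_iso[OF I] ds by auto
  moreover have eM: "\<forall>(K::nat set) c. finite K \<and> metric_on K c \<and> dist_set K c \<subseteq> D \<longrightarrow>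
        (\<exists>g. g ` K \<subseteq> H \<and> (\<forall>x\<in>K. \<forall>y\<in>K. d (g x) (g y) = c x y))"
    using U unfolding in_U_def by auto
  ultimately obtain f where f: "f ` (h ` A) \<subseteq> H" "\<forall>x\<in>h`A. \<forall>y\<in>h`A. d (f x) (f y) = e' x y"
    by blast
  have "\<forall>x\<in>A. \<forall>y\<in>A. d (f (h x)) (f (h y)) = e x y"
  proof (intro ballI)
    fix x y assume "x \<in> A" "y \<in> A"
    then have "d (f (h x)) (f (h y)) = e' (h x) (h y)" using f(2) by blast
    also have "\<dots> = e x y" using inj \<open>x \<in> A\<close> \<open>y \<in> A\<close> unfolding e'_def by simp
    finally show "d (f (h x)) (f (h y)) = e x y" .
  qed
  moreover have "(f \<circ> h) ` A \<subseteq> H" using f(1) by (auto simp: image_comp[symmetric])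
  ultimately show ?thesis by (intro exI[of _ "f \<circ> h"]) simp
qed

lemma tri:
  fixes d :: "'a \<Rightarrow> 'a \<Rightarrow> real" and e :: "nat \<Rightarrow> nat \<Rightarrow> real"
  assumes dF: "\<forall>x\<in>F. \<forall>y\<in>F. d x y \<ge> 0 \<and> (d x y = 0 \<longleftrightarrow> x = y) \<and> d x y = d y x"
    and tF: "\<forall>x\<in>F. \<forall>y\<in>F. \<forall>z\<in>F. d x z \<le> d x y + d y z"
    and eN: "\<forall>x\<in>N. \<forall>y\<in>N. e x y \<ge> 0 \<and> (e x y = 0 \<longleftrightarrow> x = y) \<and> e x y = e y x"
    and tN: "\<forall>x\<in>N. \<forall>y\<in>N. \<forall>z\<in>N. e x z \<le> e x y + e y z"
    and kt2: "\<forall>x\<in>F. \<forall>y\<in>F. t x \<le> t y + d x y \<and> d x y \<le> t x + t y"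
    and bd: "\<forall>x\<in>F. \<forall>a\<in>N. \<forall>b\<in>N. e a b \<le> 2 * t x"
    and tpos: "\<forall>x\<in>F. t x > 0"
    and u: "u \<in> Inl ` F \<union> Inr ` N" and v: "v \<in> Inl ` F \<union> Inr ` N" and w: "w \<in> Inl ` F \<union> Inr ` N"
  shows "(case u of Inl x \<Rightarrow> (case w of Inl y \<Rightarrow> d x y | Inr b \<Rightarrow> t x)
                      | Inr a \<Rightarrow> (case w of Inl y \<Rightarrow> t y | Inr b \<Rightarrow> e a b)) \<le>
         (case u of Inl x \<Rightarrow> (case v of Inl y \<Rightarrow> d x y | Inr b \<Rightarrow> t x)
                      | Inr a \<Rightarrow> (case v of Inl y \<Rightarrow> t y | Inr b \<Rightarrow> e a b)) +
         (case v of Inl x \<Rightarrow> (case w of Inl y \<Rightarrow> d x y | Inr b \<Rightarrow> t x)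
                      | Inr a \<Rightarrow> (case w of Inl y \<Rightarrow> t y | Inr b \<Rightarrow> e a b))"
proof -
  have A: "\<And>x y. x\<in>F \<Longrightarrow> y\<in>F \<Longrightarrow> t x \<le> d x y + t y" using kt2 by force
  have B: "\<And>x y. x\<in>F \<Longrightarrow> y\<in>F \<Longrightarrow> t y \<le> t x + d x y" using kt2 dF by force
  have C: "\<And>x y. x\<in>F \<Longrightarrow> y\<in>F \<Longrightarrow> d x y \<le> t x + t y" using kt2 by force
  have E: "\<And>a b. a\<in>N \<Longrightarrow> b\<in>N \<Longrightarrow> e a b \<ge> 0" using eN by force
  have G: "\<And>x a b. x\<in>F \<Longrightarrow> a\<in>N \<Longrightarrow> b\<in>N \<Longrightarrow> e a b \<le> t x + t x" using bd by force
  show ?thesis using u v w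
    apply (elim UnE imageE)
    using tF tN A B C E G by (auto simp: add_increasing add_increasing2)
qed

lemma basic:
  fixes d :: "'a \<Rightarrow> 'a \<Rightarrow> real" and e :: "nat \<Rightarrow> nat \<Rightarrow> real"
  assumes dF: "\<forall>x\<in>F. \<forall>y\<in>F. d x y \<ge> 0 \<and> (d x y = 0 \<longleftrightarrow> x = y) \<and> d x y = d y x"
    and eN: "\<forall>x\<in>N. \<forall>y\<in>N. e x y \<ge> 0 \<and> (e x y = 0 \<longleftrightarrow> x = y) \<and> e x y = e y x"
    and tpos: "\<forall>x\<in>F. t x > 0"
    and u: "u \<in> Inl ` F \<union> Inr ` N" and v: "v \<in> Inl ` F \<union> Inr ` N"
  defines "c \<equiv> (\<lambda>u v. case u of Inl x \<Rightarrow> (case v of Inl y \<Rightarrow> d x y | Inr b \<Rightarrow> t x)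
                      | Inr a \<Rightarrow> (case v of Inl y \<Rightarrow> t y | Inr b \<Rightarrow> e a b))"
  shows "c u v \<ge> 0 \<and> (c u v = 0 \<longleftrightarrow> u = v) \<and> c u v = c v u"
  using u v
  apply (elim UnE imageE)
  using dF eN tpos unfolding c_def by force+

lemma orb_embed:
  fixes N :: "nat set"
  assumes U: "in_U D H d" and Dpos: "\<forall>x\<in>D. x \<ge> 0" and K: "katetov D H d F t"
    and fin: "finite N" and m: "metric_on N e" and ds: "dist_set N e \<subseteq> D"
    and bd: "\<forall>x\<in>F. \<forall>a\<in>N. \<forall>b\<in>N. e a b \<le> 2 * t x"
  shows "\<exists>f. f ` N \<subseteq> orb H d F t \<and> (\<forall>a\<in>N. \<forall>b\<in>N. d (f a) (f b) = e a b)"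
proof -
  have mH: "metric_on H d" and dsH: "dist_set H d = D" and hom: "homogeneous H d"
    using U unfolding in_U_def by auto
  have FH: "F \<subseteq> H" and finF: "finite F" and tD: "t ` F \<subseteq> D - {0}"
    and kt: "\<forall>x\<in>F. \<forall>y\<in>F. \<bar>t x - t y\<bar> \<le> d x y \<and> d x y \<le> t x + t y"
    using K unfolding katetov_def by auto
  have tpos: "\<forall>x\<in>F. t x > 0" using tD Dpos by force
  have kt2: "\<forall>x\<in>F. \<forall>y\<in>F. t x \<le> t y + d x y \<and> d x y \<le> t x + t y"
  proof (intro ballI)
    fix x y assume "x \<in> F" "y \<in> F"
    then have "\<bar>t x - t y\<bar> \<le> d x y \<and> d x y \<le> t x + t y" using kt by blast
    then show "t x \<le> t y + d x y \<and> d x y \<le> t x + t y" by linarith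
  qed
  have dF: "\<forall>x\<in>F. \<forall>y\<in>F. d x y \<ge> 0 \<and> (d x y = 0 \<longleftrightarrow> x = y) \<and> d x y = d y x"
    and tF: "\<forall>x\<in>F. \<forall>y\<in>F. \<forall>z\<in>F. d x z \<le> d x y + d y z"
  proof -
    have mH1: "\<forall>x\<in>H. \<forall>y\<in>H. d x y \<ge> 0 \<and> (d x y = 0 \<longleftrightarrow> x = y) \<and> d x y = d y x"
      and mH2: "\<forall>x\<in>H. \<forall>y\<in>H. \<forall>z\<in>H. d x z \<le> d x y + d y z"
      using mH unfolding metric_on_def by blast+
    show "\<forall>x\<in>F. \<forall>y\<in>F. d x y \<ge> 0 \<and> (d x y = 0 \<longleftrightarrow> x = y) \<and> d x y = d y x"
      using mH1 FH by blast
    show "\<forall>x\<in>F. \<forall>y\<in>F. \<forall>z\<in>F. d x z \<le> d x y + d y z"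
      using mH2 FH by blast
  qed
  have eN: "\<forall>x\<in>N. \<forall>y\<in>N. e x y \<ge> 0 \<and> (e x y = 0 \<longleftrightarrow> x = y) \<and> e x y = e y x"
    and tN: "\<forall>x\<in>N. \<forall>y\<in>N. \<forall>z\<in>N. e x z \<le> e x y + e y z"
    using m unfolding metric_on_def by auto
  define ce :: "'a + nat \<Rightarrow> 'a + nat \<Rightarrow> real" where
    "ce = (\<lambda>u v. case u of Inl x \<Rightarrow> (case v of Inl y \<Rightarrow> d x y | Inr b \<Rightarrow> t x)
                      | Inr a \<Rightarrow> (case v of Inl y \<Rightarrow> t y | Inr b \<Rightarrow> e a b))"
  define A where "A = Inl ` F \<union> Inr ` N"
  have mA: "metric_on A ce" unfolding metric_on_def
  proof (intro conjI ballI)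
    fix u v assume "u \<in> A" "v \<in> A"
    then have "ce u v \<ge> 0 \<and> (ce u v = 0 \<longleftrightarrow> u = v) \<and> ce u v = ce v u"
      unfolding A_def ce_def by (rule basic[OF dF eN tpos])
    then show "ce u v \<ge> 0" "ce u v = 0 \<longleftrightarrow> u = v" "ce u v = ce v u" by auto
  next
    fix u v w assume "u \<in> A" "v \<in> A" "w \<in> A"
    then show "ce u w \<le> ce u v + ce v w"
      unfolding A_def ce_def by (rule tri[OF dF tF eN tN kt2 bd tpos])
  qed
  have dA: "dist_set A ce \<subseteq> D"
  proof
    fix r assume "r \<in> dist_set A ce"
    then obtain u v where uv: "u \<in> A" "v \<in> A" "r = ce u v" unfolding dist_set_def by auto
    have dd: "\<And>x y. x \<in> F \<Longrightarrow> y \<in> F \<Longrightarrow> d x y \<in> D"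
      using dsH FH unfolding dist_set_def by blast
    have ee: "\<And>x y. x \<in> N \<Longrightarrow> y \<in> N \<Longrightarrow> e x y \<in> D"
      using ds unfolding dist_set_def by blast
    show "r \<in> D" using uv tD dd ee unfolding A_def ce_def by auto
  qed
  have "finite A" unfolding A_def using finF fin by auto
  then obtain \<phi> where phi: "\<phi> ` A \<subseteq> H" "\<forall>u\<in>A. \<forall>v\<in>A. d (\<phi> u) (\<phi> v) = ce u v"
    using embed_any[OF U _ mA dA] by blast
  define p where "p = \<phi> \<circ> Inl"
  have phLL: "\<forall>x\<in>F. \<forall>y\<in>F. d (\<phi> (Inl x)) (\<phi> (Inl y)) = d x y"
   and phRL: "\<forall>a\<in>N. \<forall>y\<in>F. d (\<phi> (Inr a)) (\<phi> (Inl y)) = t y"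
   and phRR: "\<forall>a\<in>N. \<forall>b\<in>N. d (\<phi> (Inr a)) (\<phi> (Inr b)) = e a b"
    using phi(2) unfolding A_def ce_def by simp_all
  have pd: "\<forall>x\<in>F. \<forall>y\<in>F. d (p x) (p y) = d x y" using phLL unfolding p_def by simp
  have pinj: "inj_on p F"
  proof (rule inj_onI)
    fix x y assume "x \<in> F" "y \<in> F" "p x = p y"
    moreover have "p x \<in> H" using phi(1) \<open>x\<in>F\<close> unfolding p_def A_def by auto
    ultimately have "d x y = d (p x) (p x)" using pd \<open>x\<in>F\<close> \<open>y\<in>F\<close> by metis
    also have "\<dots> = 0" using mH \<open>p x \<in> H\<close> unfolding metric_on_def by simp
    finally have "d x y = 0" .
    then show "x = y" using dF \<open>x\<in>F\<close> \<open>y\<in>F\<close> by auto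
  qed
  have pI: "isometry_onto p F d (p ` F) d"
    unfolding isometry_onto_def using pinj pd by (auto simp: inj_on_imp_bij_betw)
  have qI: "isometry_onto (inv_into F p) (p ` F) d F d" by (rule iso_inv[OF pI])
  have "p ` F \<subseteq> H" using phi(1) unfolding p_def A_def by auto
  then obtain g where g: "isometry_onto g H d H d" "\<forall>y\<in>p ` F. g y = inv_into F p y"
    using hom[unfolded homogeneous_def, rule_format, of "p ` F" F "inv_into F p"] FH finF qI
    by blast
  have gH: "\<And>y. y \<in> H \<Longrightarrow> g y \<in> H" and gd: "\<forall>x\<in>H. \<forall>y\<in>H. d (g x) (g y) = d x y"
    using g(1) unfolding isometry_onto_def bij_betw_def by auto
  have gp: "\<And>x. x \<in> F \<Longrightarrow> g (p x) = x" using g(2) pinj by auto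
  define f where "f = g \<circ> \<phi> \<circ> Inr"
  have phiN: "\<And>a. a \<in> N \<Longrightarrow> \<phi> (Inr a) \<in> H" using phi(1) unfolding A_def by auto
  have pH: "\<And>x. x \<in> F \<Longrightarrow> p x \<in> H" using \<open>p ` F \<subseteq> H\<close> by auto
  have ft: "\<And>a x. a \<in> N \<Longrightarrow> x \<in> F \<Longrightarrow> d (f a) x = t x"
  proof -
    fix a x assume a: "a \<in> N" and x: "x \<in> F"
    have "d (f a) x = d (g (\<phi> (Inr a))) (g (p x))" using gp[OF x] unfolding f_def by simp
    also have "\<dots> = d (\<phi> (Inr a)) (\<phi> (Inl x))" using gd phiN[OF a] pH[OF x] unfolding p_def by auto
    also have "\<dots> = t x" using phRL a x by simp
    finally show "d (f a) x = t x" .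
  qed
  have "f ` N \<subseteq> orb H d F t"
  proof
    fix y assume "y \<in> f ` N"
    then obtain a where a: "a \<in> N" "y = f a" by auto
    have "y \<in> H" using a gH phiN unfolding f_def by auto
    moreover have "y \<notin> F"
    proof
      assume "y \<in> F"
      then have "d y y = t y" using ft a by auto
      moreover have "d y y = 0" using dF \<open>y \<in> F\<close> by auto
      ultimately show False using tpos \<open>y \<in> F\<close> by auto
    qed
    ultimately show "y \<in> orb H d F t" unfolding orb_def using ft a by auto
  qed
  moreover have "\<forall>a\<in>N. \<forall>b\<in>N. d (f a) (f b) = e a b"
    using gd phiN phRR unfolding f_def by simp
  ultimately show ?thesis by blast
qed



lemma metric_on_subset: "metric_on M d \<Longrightarrow> S \<subseteq> M \<Longrightarrow> metric_on S d"
  unfolding metric_on_def by blast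

lemma equil:
  assumes "(c::real) > 0"
  shows "metric_on {0..(k::nat)} (\<lambda>a b. if a = b then 0 else c)"
    and "dist_set {0..k} (\<lambda>a b. if a = b then 0 else c) \<subseteq> {0, c}"
  using assms unfolding metric_on_def dist_set_def by auto

lemma orb_char:
  assumes "metric_on H d" "\<forall>x\<in>F. t x > 0" "z \<in> H" "\<forall>x\<in>F. d z x = t x" "F \<subseteq> H"
  shows "z \<in> orb H d F t"
proof -
  have "z \<notin> F"
  proof
    assume "z \<in> F"
    then have "d z z = t z" "t z > 0" using assms by auto
    moreover have "d z z = 0" using assms(1) assms(3) unfolding metric_on_def by simp
    ultimately show False by simp
  qed
  then show ?thesis using assms unfolding orb_def by auto
qed

lemma orb_in_U:
  assumes U: "in_U D H d" and Dpos: "\<forall>x\<in>D. x \<ge> 0" and K: "katetov D H d F t" and Fne: "F \<noteq> {}"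
  shows "in_U {n \<in> D. n \<le> 2 * rank F t} (orb H d F t) d \<and> infinite (orb H d F t)"
proof -
  define Ob where "Ob = orb H d F t"
  define r where "r = rank F t"
  define Dt where "Dt = {n \<in> D. n \<le> 2 * r}"
  have cH: "countable H" and mH: "metric_on H d" and dsH: "dist_set H d = D" and hom: "homogeneous H d"
    using U unfolding in_U_def by auto
  have FH: "F \<subseteq> H" and finF: "finite F" and tD: "t ` F \<subseteq> D - {0}"
    using K unfolding katetov_def by auto
  have tpos: "\<forall>x\<in>F. t x > 0" using tD Dpos by force
  have rin: "r \<in> t ` F" unfolding r_def rank_def using finF Fne by simp
  then obtain x0 where x0: "x0 \<in> F" "t x0 = r" by auto
  have rle: "\<forall>x\<in>F. r \<le> t x" unfolding r_def rank_def using finF by simp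
  have rpos: "r > 0" using tpos x0 by auto
  have rD: "r \<in> D" using rin tD by auto
  have OH: "Ob \<subseteq> H" and OF: "Ob \<inter> F = {}" and Ot: "\<And>y x. y \<in> Ob \<Longrightarrow> x \<in> F \<Longrightarrow> d y x = t x"
    unfolding Ob_def orb_def by auto
  have dsym: "\<And>x y. x \<in> H \<Longrightarrow> y \<in> H \<Longrightarrow> d x y = d y x"
    and dtri: "\<And>x y z. x \<in> H \<Longrightarrow> y \<in> H \<Longrightarrow> z \<in> H \<Longrightarrow> d x z \<le> d x y + d y z"
    and dz: "\<And>x. x \<in> H \<Longrightarrow> d x x = 0"
    using mH unfolding metric_on_def by auto
  have Obd: "\<And>y y'. y \<in> Ob \<Longrightarrow> y' \<in> Ob \<Longrightarrow> d y y' \<le> 2 * r"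
  proof -
    fix y y' assume "y \<in> Ob" "y' \<in> Ob"
    then have "d y y' \<le> d y x0 + d x0 y'" using dtri OH x0 FH by blast
    also have "\<dots> = t x0 + t x0" using Ot \<open>y \<in> Ob\<close> \<open>y' \<in> Ob\<close> x0(1) dsym OH FH by (metis subsetD)
    finally show "d y y' \<le> 2 * r" using x0 by simp
  qed
  have emb: "\<And>(N::nat set) e. finite N \<Longrightarrow> metric_on N e \<Longrightarrow> dist_set N e \<subseteq> Dt \<Longrightarrow>
      \<exists>f. f ` N \<subseteq> Ob \<and> (\<forall>a\<in>N. \<forall>b\<in>N. d (f a) (f b) = e a b)"
  proof -
    fix N :: "nat set" and e assume a: "finite N" "metric_on N e" "dist_set N e \<subseteq> Dt"
    have "dist_set N e \<subseteq> D" using a(3) unfolding Dt_def by auto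
    moreover have "\<forall>x\<in>F. \<forall>a\<in>N. \<forall>b\<in>N. e a b \<le> 2 * t x"
    proof (intro ballI)
      fix x a b assume "x \<in> F" "a \<in> N" "b \<in> N"
      then have "e a b \<in> Dt" using a(3) unfolding dist_set_def by blast
      then have "e a b \<le> 2 * r" unfolding Dt_def by auto
      then show "e a b \<le> 2 * t x" using rle \<open>x \<in> F\<close> by force
    qed
    ultimately show "\<exists>f. f ` N \<subseteq> Ob \<and> (\<forall>a\<in>N. \<forall>b\<in>N. d (f a) (f b) = e a b)"
      using orb_embed[OF U Dpos K a(1) a(2)] unfolding Ob_def by blast
  qed
  have eqD: "\<And>c. c \<in> Dt \<Longrightarrow> c > 0 \<Longrightarrow> dist_set {0..(k::nat)} (\<lambda>a b. if a = b then 0 else c) \<subseteq> Dt" for k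
  proof -
    fix c assume "c \<in> Dt" "c > 0"
    moreover have "0 \<in> Dt" unfolding Dt_def using rpos dsH mH FH x0 dz
      by (force simp: dist_set_def)
    ultimately show "dist_set {0..k} (\<lambda>a b. if a = b then 0 else c) \<subseteq> Dt" using equil(2)[of c k] by auto
  qed
  have rDt: "r \<in> Dt" unfolding Dt_def using rD rpos by auto
  have c1: "countable Ob" using cH OH countable_subset by blast
  have c2: "metric_on Ob d" using metric_on_subset[OF mH OH] .
  have c3: "dist_set Ob d = Dt"
  proof
    show "dist_set Ob d \<subseteq> Dt"
    proof
      fix n assume "n \<in> dist_set Ob d"
      then obtain y y' where yy: "y \<in> Ob" "y' \<in> Ob" "n = d y y'" unfolding dist_set_def by auto
      then have "n \<in> D" using dsH OH unfolding dist_set_def by blast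
      then show "n \<in> Dt" using Obd yy unfolding Dt_def by auto
    qed
  next
    show "Dt \<subseteq> dist_set Ob d"
    proof
      fix n assume n: "n \<in> Dt"
      show "n \<in> dist_set Ob d"
      proof (cases "n = 0")
        case True
        obtain f where f: "f ` {0..0::nat} \<subseteq> Ob"
          using emb[OF _ equil(1)[OF rpos, of 0] eqD[OF rDt rpos, of 0]] by auto
        then have "f 0 \<in> Ob" by auto
        then have "d (f 0) (f 0) = 0" using dz OH by auto
        then show ?thesis using \<open>f 0 \<in> Ob\<close> True unfolding dist_set_def by force
      next
        case False
        then have np: "n > 0" using n Dpos unfolding Dt_def by force
        obtain f where f: "f ` {0..1::nat} \<subseteq> Ob"
            "\<forall>a\<in>{0..1}. \<forall>b\<in>{0..1}. d (f a) (f b) = (if a = b then 0 else n)"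
          using emb[OF _ equil(1)[OF np, of 1] eqD[OF n np, of 1]] by auto
        then have "f 0 \<in> Ob" "f 1 \<in> Ob" "d (f 0) (f 1) = n" by auto
        then show ?thesis unfolding dist_set_def by force
      qed
    qed
  qed
  have c4: "homogeneous Ob d" unfolding homogeneous_def
  proof (intro allI impI)
    fix A B h assume as: "A \<subseteq> Ob \<and> B \<subseteq> Ob \<and> finite A \<and> isometry_onto h A d B d"
    then have AO: "A \<subseteq> Ob" and BO: "B \<subseteq> Ob" and finA: "finite A" and hI: "isometry_onto h A d B d"
      by auto
    define h' where "h' = (\<lambda>x. if x \<in> F then x else h x)"
    have AF: "A \<inter> F = {}" "B \<inter> F = {}" using AO BO OF by auto
    have hb: "bij_betw h A B" and hd: "\<forall>x\<in>A. \<forall>y\<in>A. d (h x) (h y) = d x y"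
      using hI unfolding isometry_onto_def by auto
    have hB: "\<And>x. x \<in> A \<Longrightarrow> h x \<in> B" using hb unfolding bij_betw_def by auto
    have "bij_betw h' A B = bij_betw h A B" using AF by (intro bij_betw_cong) (auto simp: h'_def)
    then have b1: "bij_betw h' A B" using hb by simp
    have "bij_betw h' F F = bij_betw id F F" by (intro bij_betw_cong) (auto simp: h'_def)
    then have b2: "bij_betw h' F F" by simp
    have b: "bij_betw h' (A \<union> F) (B \<union> F)" by (rule bij_betw_combine[OF b1 b2 AF(2)])
    have d': "\<forall>x\<in>A \<union> F. \<forall>y\<in>A \<union> F. d (h' x) (h' y) = d x y"
    proof (intro ballI)
      fix x y assume x: "x \<in> A \<union> F" and y: "y \<in> A \<union> F"
      show "d (h' x) (h' y) = d x y"
      proof (cases "x \<in> F")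
        case xF: True
        show ?thesis
        proof (cases "y \<in> F")
          case True then show ?thesis using xF unfolding h'_def by simp
        next
          case False
          then have "y \<in> A" using y by auto
          then have "h y \<in> Ob" "y \<in> Ob" using hB BO AO by auto
          then have "d x (h y) = d (h y) x" "d x y = d y x" using dsym OH FH xF by auto
          then show ?thesis using xF False Ot \<open>h y \<in> Ob\<close> \<open>y \<in> Ob\<close> unfolding h'_def by simp
        qed
      next
        case xF: False
        then have xA: "x \<in> A" using x by auto
        then have hx: "h x \<in> Ob" "x \<in> Ob" using hB BO AO by auto
        show ?thesis
        proof (cases "y \<in> F")
          case True then show ?thesis using xF hx Ot unfolding h'_def by simp
        next
          case False
          then have "y \<in> A" using y by auto
          then show ?thesis using xF False xA hd unfolding h'_def by simp
        qed
      qed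
    qed
    have I': "isometry_onto h' (A \<union> F) d (B \<union> F) d" unfolding isometry_onto_def using b d' by auto
    have "A \<union> F \<subseteq> H" "B \<union> F \<subseteq> H" "finite (A \<union> F)" using AO BO OH FH finA finF by auto
    then obtain g where g: "isometry_onto g H d H d" "\<forall>x\<in>A \<union> F. g x = h' x"
      using hom[unfolded homogeneous_def, rule_format, of "A \<union> F" "B \<union> F" h'] I' by blast
    have gb: "bij_betw g H H" and gd: "\<forall>x\<in>H. \<forall>y\<in>H. d (g x) (g y) = d x y"
      using g(1) unfolding isometry_onto_def by auto
    have gF: "\<And>x. x \<in> F \<Longrightarrow> g x = x" using g(2) unfolding h'_def by auto
    have gH: "g ` H = H" using gb unfolding bij_betw_def by auto
    have ginj: "inj_on g H" using gb unfolding bij_betw_def by auto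
    have "g ` Ob = Ob"
    proof
      show "g ` Ob \<subseteq> Ob"
      proof
        fix z assume "z \<in> g ` Ob"
        then obtain y where y: "y \<in> Ob" "z = g y" by auto
        have zH: "z \<in> H" using y OH gH by auto
        have "\<forall>x\<in>F. d z x = t x"
        proof
          fix x assume "x \<in> F"
          then have "d z x = d (g y) (g x)" using y gF by simp
          also have "\<dots> = d y x" using gd y OH FH \<open>x \<in> F\<close> by auto
          also have "\<dots> = t x" using Ot y \<open>x \<in> F\<close> by auto
          finally show "d z x = t x" .
        qed
        then show "z \<in> Ob" using orb_char[OF mH tpos zH _ FH] unfolding Ob_def by auto
      qed
    next
      show "Ob \<subseteq> g ` Ob"
      proof
        fix z assume z: "z \<in> Ob"
        then obtain y where y: "y \<in> H" "z = g y" using gH OH by auto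
        have "\<forall>x\<in>F. d y x = t x"
        proof
          fix x assume "x \<in> F"
          have "d y x = d (g y) (g x)" using gd y FH \<open>x \<in> F\<close> by auto
          also have "\<dots> = d z x" using y gF \<open>x \<in> F\<close> by simp
          also have "\<dots> = t x" using Ot z \<open>x \<in> F\<close> by auto
          finally show "d y x = t x" .
        qed
        then have "y \<in> Ob" using orb_char[OF mH tpos y(1) _ FH] unfolding Ob_def by auto
        then show "z \<in> g ` Ob" using y by auto
      qed
    qed
    then have "isometry_onto g Ob d Ob d"
      unfolding isometry_onto_def bij_betw_def using inj_on_subset[OF ginj OH] gd OH by blast
    moreover have "\<forall>x\<in>A. g x = h x" using g(2) AF unfolding h'_def by auto
    ultimately show "\<exists>g. isometry_onto g Ob d Ob d \<and> (\<forall>x\<in>A. g x = h x)" by blast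
  qed
  have c5: "\<forall>(N::nat set) e. finite N \<and> metric_on N e \<and> dist_set N e \<subseteq> Dt \<longrightarrow>
        (\<exists>f. f ` N \<subseteq> Ob \<and> (\<forall>x\<in>N. \<forall>y\<in>N. d (f x) (f y) = e x y))"
    using emb by blast
  have inU: "in_U Dt Ob d" unfolding in_U_def by (intro conjI c1 c2 c3 c4 c5)
  have inf: "infinite Ob"
  proof
    assume finO: "finite Ob"
    define k where "k = card Ob"
    obtain f where f: "f ` {0..k} \<subseteq> Ob"
        "\<forall>a\<in>{0..k}. \<forall>b\<in>{0..k}. d (f a) (f b) = (if a = b then 0 else r)"
      using emb[OF _ equil(1)[OF rpos, of k] eqD[OF rDt rpos, of k]] by auto
    have "inj_on f {0..k}"
    proof (rule inj_onI)
      fix a b assume ab: "a \<in> {0..k}" "b \<in> {0..k}" "f a = f b"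
      then have "f a \<in> H" using f(1) OH by (auto simp: image_subset_iff)
      then have "d (f a) (f b) = 0" using ab dz by simp
      moreover have "d (f a) (f b) = (if a = b then 0 else r)" using f(2) ab(1,2) by blast
      ultimately show "a = b" using rpos by (auto split: if_splits)
    qed
    then have "card (f ` {0..k}) = Suc k" by (simp add: card_image)
    moreover have "card (f ` {0..k}) \<le> card Ob" using card_mono[OF finO f(1)] .
    ultimately show False unfolding k_def by simp
  qed
  show ?thesis using inU inf unfolding Ob_def Dt_def r_def by simp
qed

theorem theorem2p2:
  fixes D :: "real set" and H :: "'a set" and d :: "'a \<Rightarrow> 'a \<Rightarrow> real"
    and F :: "'a set" and t :: "'a \<Rightarrow> real"
  assumes "finite D" and "0 \<in> D" and "\<forall>x\<in>D. x \<ge> 0"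
    and "universal D"
    and "in_U D H d"
    and "katetov D H d F t" and "F \<noteq> {}"
  shows "universal {n \<in> D. n \<le> 2 * rank F t}
       \<and> (\<exists>(N::nat set) e. in_U {n \<in> D. n \<le> 2 * rank F t} N e \<and>
            isometric (orb H d F t) d N e)
       \<and> infinite (orb H d F t)"
proof -
  have a: "in_U {n \<in> D. n \<le> 2 * rank F t} (orb H d F t) d" and b: "infinite (orb H d F t)"
    using orb_in_U[OF assms(5) assms(3) assms(6) assms(7)] by auto
  obtain N :: "nat set" and e where Ne: "in_U {n \<in> D. n \<le> 2 * rank F t} N e"
    "isometric (orb H d F t) d N e"
    using to_nat_copy[OF a] by blast
  then have "universal {n \<in> D. n \<le> 2 * rank F t}" unfolding universal_def by blast
  then show ?thesis using Ne b by blast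
qed

end
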